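(* Let $k\ge2$, let $r=2^k$, and let $T_r$ be the $(k,r)$-tree, with $n=|T_r|$ nodes. Let $X$ be the atomic strongly-stable sequence with respect to $T_r$, whose length is $m=2^{rk}$. Then, as $k\to\infty$, $$\mathrm{cost}(OPT,X,T_r)=\Theta\Big(m\cdot\frac{\lg n}{\lg\lg\lg n}\Big).$$
   Context: $\lg$ is the base-2 logarithm. Binary search tree model. An algorithm $A$ serves a query sequence $X=[x_1,\dots,x_m]$ from an initial BST $T_0$. Before serving $x_t$ it holds a BST $T_{t-1}$; it searches $x_t$ from the root and may then restructure the tree by rotations into $T_t$. Let $P_t$ be the set of nodes on the root-to-$x_t$ path of $T_{t-1}$, and let $U_t$ be the node set of the minimal subtree containing all edges rotated in transforming $T_{t-1}$ into $T_t$. The cost at time $t$ is $|P_t\cup U_t|$, and $\mathrm{cost}(A,X,T_0)$ is the sum of these costs. $OPT$ denotes an algorithm of minimum cost on $(X,T_0)$ that knows all of $X$ in advance. $(k,r)$-trees. Let $k\ge2$ and $r\ge0$ be integers. $T_0$ is a single node. For $r\ge1$, $T_r$ has $k$ trunk nodes $w_1,\dots,w_k$: $w_1$ is the root, $w_2$ is the right child of $w_1$, and $w_{j+1}$ is the left child of $w_j$ for $2\le j\le k-1$. The left child of $w_k$ is a single leaf (the actual leaf). Each of the remaining $k$ child positions of trunk nodes (the left child of $w_1$ and the right child of $w_j$ for $2\le j\le k$) is the root of a copy of $T_{r-1}$. Keys are $1,\dots,|T_r|$ in symmetric order. Stable sequences. Let $T$ be a full binary search tree, and let $X$ be a query sequence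 consisting only of keys stored at leaves of $T$. For an inner node $v$, let $X_v$ be the subsequence of $X$ consisting of the queries to keys in the subtree of $v$. The node $v$ is strongly-stable if consecutive queries of $X_v$ alternate between the left and right subtrees of $v$. $X$ is strongly-stable if every inner node of $T$ is strongly-stable. The atomic sequence is the shortest such sequence all of whose repetitions are again strongly-stable for $T$. *)

theory Defs
  imports Complex_Main "HOL-Library.Tree"
begin

fun subt :: "nat tree \<Rightarrow> nat \<Rightarrow> nat tree" where
  "subt Leaf v = Leaf"
| "subt (Node l a r) v =
     (if v = a then Node l a r else if v < a then subt l v else subt r v)"

definition anc :: "nat tree \<Rightarrow> nat \<Rightarrow> nat \<Rightarrow> bool" where
  "anc T v w \<longleftrightarrow> v \<in> set_tree T \<and> w \<in> set_tree (subt T v)"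

definition path_nodes :: "nat tree \<Rightarrow> nat \<Rightarrow> nat set" where
  "path_nodes T x = {v. anc T v x}"

text \<open>Node set of the minimal (connected) subtree of T containing all nodes of S.\<close>
definition min_subtree :: "nat tree \<Rightarrow> nat set \<Rightarrow> nat set" where
  "min_subtree T S = {v. (\<exists>s\<in>S. anc T v s) \<and> (\<forall>w. (\<forall>s\<in>S. anc T w s) \<longrightarrow> anc T w v)}"

inductive rot :: "nat tree \<Rightarrow> nat \<times> nat \<Rightarrow> nat tree \<Rightarrow> bool" where
  rotR: "rot (Node (Node A x B) y C) (x, y) (Node A x (Node B y C))"
| rotL: "rot (Node A x (Node B y C)) (x, y) (Node (Node A x B) y C)"
| inL: "rot l e l' \<Longrightarrow> rot (Node l a r) e (Node l' a r)"
| inR: "rot r e r' \<Longrightarrow> rot (Node l a r) e (Node l a r')"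

inductive rots :: "nat tree \<Rightarrow> (nat \<times> nat) list \<Rightarrow> nat tree \<Rightarrow> bool" where
  rots_nil: "rots T [] T"
| rots_cons: "rot T e T1 \<Longrightarrow> rots T1 es T2 \<Longrightarrow> rots T (e # es) T2"

definition edge_nodes :: "(nat \<times> nat) list \<Rightarrow> nat set" where
  "edge_nodes es = fst ` set es \<union> snd ` set es"

text \<open>Cost |P_t \<union> U_t| of searching x in T and then performing rotations es.\<close>
definition step_cost :: "nat tree \<Rightarrow> nat \<Rightarrow> (nat \<times> nat) list \<Rightarrow> nat" where
  "step_cost T x es = card (path_nodes T x \<union> min_subtree T (edge_nodes es))"

text \<open>exec T X c: some (offline) algorithm serves X from initial tree T with total cost c.\<close>
inductive exec :: "nat tree \<Rightarrow> nat list \<Rightarrow> nat \<Rightarrow> bool" where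
  exec_nil: "exec T [] 0"
| exec_cons: "rots T es T' \<Longrightarrow> exec T' xs c \<Longrightarrow> exec T (x # xs) (step_cost T x es + c)"

definition opt_cost :: "nat tree \<Rightarrow> nat list \<Rightarrow> nat" where
  "opt_cost T X = (LEAST c. exec T X c)"

text \<open>chain i S: trunk nodes w_{k-i+1},...,w_k (i of them), each with right child S,
  the last one with the actual leaf as left child.\<close>
fun chain :: "nat \<Rightarrow> unit tree \<Rightarrow> unit tree" where
  "chain 0 S = Node Leaf () Leaf"
| "chain (Suc i) S = Node (chain i S) () S"

fun kr_shape :: "nat \<Rightarrow> nat \<Rightarrow> unit tree" where
  "kr_shape k 0 = Node Leaf () Leaf"
| "kr_shape k (Suc r) = Node (kr_shape k r) () (chain (k - 1) (kr_shape k r))"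

fun lab :: "unit tree \<Rightarrow> nat \<Rightarrow> nat tree" where
  "lab Leaf i = Leaf"
| "lab (Node l _ r) i = Node (lab l i) (i + size l) (lab r (i + size l + 1))"

definition kr_tree :: "nat \<Rightarrow> nat \<Rightarrow> nat tree" where
  "kr_tree k r = lab (kr_shape k r) 1"

definition leaf_keys :: "nat tree \<Rightarrow> nat set" where
  "leaf_keys T = {v \<in> set_tree T. subt T v = Node Leaf v Leaf}"

definition inner_keys :: "nat tree \<Rightarrow> nat set" where
  "inner_keys T = {v \<in> set_tree T. subt T v \<noteq> Node Leaf v Leaf}"

definition strongly_stable_node :: "nat tree \<Rightarrow> nat list \<Rightarrow> nat \<Rightarrow> bool" where
  "strongly_stable_node T X v =
     (case subt T v of
        Leaf \<Rightarrow> True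
      | Node l _ r \<Rightarrow>
          (let Xv = filter (\<lambda>x. x \<in> set_tree (subt T v)) X in
           \<forall>i. Suc i < length Xv \<longrightarrow>
               ((Xv ! i \<in> set_tree l \<and> Xv ! Suc i \<in> set_tree r) \<or>
                (Xv ! i \<in> set_tree r \<and> Xv ! Suc i \<in> set_tree l))))"

definition strongly_stable :: "nat tree \<Rightarrow> nat list \<Rightarrow> bool" where
  "strongly_stable T X \<longleftrightarrow>
     set X \<subseteq> leaf_keys T \<and> (\<forall>v \<in> inner_keys T. strongly_stable_node T X v)"

definition rep_stable :: "nat tree \<Rightarrow> nat list \<Rightarrow> bool" where
  "rep_stable T X \<longleftrightarrow> (\<forall>j\<ge>1. strongly_stable T (concat (replicate j X)))"

definition atomic_seq :: "nat tree \<Rightarrow> nat list \<Rightarrow> bool" where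
  "atomic_seq T X \<longleftrightarrow> X \<noteq> [] \<and> rep_stable T X \<and>
     (\<forall>Y. Y \<noteq> [] \<and> rep_stable T Y \<longrightarrow> length X \<le> length Y)"

end

theory Submission
  imports Defs
begin


lemma subt_notin: "v \<notin> set_tree T \<Longrightarrow> subt T v = Leaf"
  by (induction T) auto

lemma subt_in: "bst T \<Longrightarrow> v \<in> set_tree T \<Longrightarrow> \<exists>l r. subt T v = Node l v r"
  by (induction T) auto

lemma subt_set_sub: "set_tree (subt T v) \<subseteq> set_tree T"
  by (induction T) auto

lemma subt_mem: "w \<in> set_tree (subt T v) \<Longrightarrow> w \<in> set_tree T"
  using subt_set_sub by blast

lemma subt_bst: "bst T \<Longrightarrow> bst (subt T v)"
  by (induction T) auto

lemma subt_self: "bst T \<Longrightarrow> v \<in> set_tree T \<Longrightarrow> v \<in> set_tree (subt T v)"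
  using subt_in by fastforce

lemma subt_subt: "bst T \<Longrightarrow> w \<in> set_tree (subt T v) \<Longrightarrow> subt (subt T v) w = subt T w"
proof (induction T)
  case Leaf then show ?case by simp
next
  case (Node l a r)
  have l: "\<forall>x\<in>set_tree l. x < a" and r: "\<forall>x\<in>set_tree r. a < x" using Node.prems(1) by auto
  have hl: "\<And>w v. w \<in> set_tree (subt l v) \<Longrightarrow> w < a" using l subt_mem by blast
  have hr: "\<And>w v. w \<in> set_tree (subt r v) \<Longrightarrow> a < w" using r subt_mem by blast
  show ?case
  proof (cases "v = a")
    case True then show ?thesis by simp
  next
    case False
    show ?thesis
    proof (cases "v < a")
      case True
      then have "w \<in> set_tree (subt l v)" using Node.prems False by simp
      moreover have "w < a" using hl calculation by blast
      ultimately show ?thesis using Node True False by simp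
    next
      case c: False
      then have "w \<in> set_tree (subt r v)" using Node.prems False by simp
      moreover have "a < w" using hr calculation by blast
      ultimately show ?thesis using Node c False by simp
    qed
  qed
qed

lemma desc_trans: "bst T \<Longrightarrow> w \<in> set_tree (subt T v) \<Longrightarrow> u \<in> set_tree (subt T w) \<Longrightarrow> u \<in> set_tree (subt T v)"
  by (metis subt_subt subt_set_sub subsetD)

lemma desc_antisym: "bst T \<Longrightarrow> a \<in> set_tree (subt T b) \<Longrightarrow> b \<in> set_tree (subt T a) \<Longrightarrow> a = b"
proof (induction T)
  case Leaf then show ?case by simp
next
  case (Node l x r)
  have l: "\<forall>y\<in>set_tree l. y < x" and r: "\<forall>y\<in>set_tree r. x < y" and bl: "bst l" and br: "bst r"
    using Node.prems(1) by auto
  have hl: "\<And>w v. w \<in> set_tree (subt l v) \<Longrightarrow> w < x" using l subt_mem by blast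
  have hr: "\<And>w v. w \<in> set_tree (subt r v) \<Longrightarrow> x < w" using r subt_mem by blast
  consider "a = x" | "b = x" | "a \<noteq> x" "b \<noteq> x" by blast
  then show ?case
  proof cases
    case 1
    with Node.prems show ?thesis using hl hr by (auto split: if_splits)
  next
    case 2
    with Node.prems show ?thesis using hl hr by (auto split: if_splits)
  next
    case 3
    show ?thesis
    proof (cases "a < x")
      case True
      then have "b \<in> set_tree (subt l a)" using Node.prems 3 by simp
      then have "b < x" using hl by blast
      then show ?thesis using Node True 3 bl by simp
    next
      case False
      then have "b \<in> set_tree (subt r a)" using Node.prems 3 by simp
      then have "x < b" using hr by blast
      then show ?thesis using Node False 3 br by simp
    qed
  qed
qed

lemma desc_nested: "bst T \<Longrightarrow> z \<in> set_tree (subt T y) \<Longrightarrow> z \<in> set_tree (subt T y') \<Longrightarrow>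
   y \<in> set_tree (subt T y') \<or> y' \<in> set_tree (subt T y)"
proof (induction T)
  case Leaf then show ?case by simp
next
  case (Node l x r)
  have l: "\<forall>y\<in>set_tree l. y < x" and r: "\<forall>y\<in>set_tree r. x < y" and bl: "bst l" and br: "bst r"
    using Node.prems(1) by auto
  have hl: "\<And>w v. w \<in> set_tree (subt l v) \<Longrightarrow> w < x" using l subt_mem by blast
  have hr: "\<And>w v. w \<in> set_tree (subt r v) \<Longrightarrow> x < w" using r subt_mem by blast
  consider "y = x" | "y' = x" | "y \<noteq> x" "y' \<noteq> x" by blast
  then show ?case
  proof cases
    case 1
    then have "y' \<in> set_tree (Node l x r)" using Node.prems(3) subt_notin by fastforce
    then show ?thesis using 1 by simp
  next
    case 2
    then have "y \<in> set_tree (Node l x r)" using Node.prems(2) subt_notin by fastforce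
    then show ?thesis using 2 by simp
  next
    case ne: 3
    consider "y < x" "y' < x" | "y < x" "\<not> y' < x" | "\<not> y < x" "y' < x" | "\<not> y < x" "\<not> y' < x" by blast
    then show ?thesis
    proof cases
      case 1 then show ?thesis using Node ne bl by simp
    next
      case 2
      then have "z < x" "x < z" using Node.prems ne hl hr by auto
      then show ?thesis by simp
    next
      case 3
      then have "z < x" "x < z" using Node.prems ne hl hr by auto
      then show ?thesis by simp
    next
      case 4 then show ?thesis using Node ne br by simp
    qed
  qed
qed


definition conv :: "nat set \<Rightarrow> nat set \<Rightarrow> bool" where
  "conv K S \<longleftrightarrow> S \<subseteq> K \<and> (\<forall>a\<in>S. \<forall>c\<in>S. \<forall>b\<in>K. a \<le> b \<and> b \<le> c \<longrightarrow> b \<in> S)"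

lemma convD: "conv K S \<Longrightarrow> a\<in>S \<Longrightarrow> c\<in>S \<Longrightarrow> b\<in>K \<Longrightarrow> a\<le>b \<Longrightarrow> b\<le>c \<Longrightarrow> b\<in>S"
  unfolding conv_def by blast
lemma conv_sub: "conv K S \<Longrightarrow> S \<subseteq> K"
  unfolding conv_def by blast
lemma conv_restrict: "conv K S \<Longrightarrow> S \<subseteq> K' \<Longrightarrow> K' \<subseteq> K \<Longrightarrow> conv K' S"
  unfolding conv_def by blast

lemma lca_exists: "bst T \<Longrightarrow> conv (set_tree T) S \<Longrightarrow> S \<noteq> {} \<Longrightarrow> \<exists>z\<in>S. S \<subseteq> set_tree (subt T z)"
proof (induction T)
  case Leaf then show ?case using conv_sub[OF Leaf.prems(2)] Leaf.prems(3) by auto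
next
  case (Node l a r)
  have l: "\<forall>y\<in>set_tree l. y < a" and r: "\<forall>y\<in>set_tree r. a < y" and bl: "bst l" and br: "bst r"
    using Node.prems(1) by auto
  show ?case
  proof (cases "a \<in> S")
    case True
    then show ?thesis using conv_sub[OF Node.prems(2)] by auto
  next
    case False
    have sub: "S \<subseteq> set_tree l \<union> set_tree r" using conv_sub[OF Node.prems(2)] False by auto
    have "S \<subseteq> set_tree l \<or> S \<subseteq> set_tree r"
    proof (rule ccontr)
      assume "\<not> ?thesis"
      then obtain s1 s2 where "s1 \<in> S" "s2 \<in> S" "s1 \<in> set_tree l" "s2 \<in> set_tree r" using sub by blast
      then have "s1 \<le> a" "a \<le> s2" using l r by auto
      then have "a \<in> S" using convD[OF Node.prems(2) \<open>s1 \<in> S\<close> \<open>s2 \<in> S\<close>] by simp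
      then show False using False by simp
    qed
    then show ?thesis
    proof
      assume h: "S \<subseteq> set_tree l"
      then have "conv (set_tree l) S" using conv_restrict[OF Node.prems(2) h] by auto
      then obtain z where z: "z \<in> S" "S \<subseteq> set_tree (subt l z)" using Node.IH(1) bl Node.prems(3) by blast
      then have "z < a" using h l by auto
      then show ?thesis using z by (intro bexI[of _ z]) auto
    next
      assume h: "S \<subseteq> set_tree r"
      then have "conv (set_tree r) S" using conv_restrict[OF Node.prems(2) h] by auto
      then obtain z where z: "z \<in> S" "S \<subseteq> set_tree (subt r z)" using Node.IH(2) br Node.prems(3) by blast
      then have "a < z" using h r by auto
      then show ?thesis using z by (intro bexI[of _ z]) auto
    qed
  qed
qed

lemma rot_inorder: "rot T e T' \<Longrightarrow> inorder T' = inorder T"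
  by (induction rule: rot.induct) auto

lemma rot_ends: "rot T (x,y) T' \<Longrightarrow> x \<in> set_tree T \<and> y \<in> set_tree T"
  by (induction T "(x,y)" T' rule: rot.induct) auto

lemma rot_set: "rot T e T' \<Longrightarrow> set_tree T' = set_tree T"
  by (metis rot_inorder set_inorder)

lemma rot_bst: "rot T e T' \<Longrightarrow> bst T \<Longrightarrow> bst T'"
  by (metis rot_inorder bst_iff_sorted_wrt_less)

lemma rot_desc: "rot T (x,y) T' \<Longrightarrow> bst T \<Longrightarrow> z \<noteq> x \<Longrightarrow> z \<noteq> y \<Longrightarrow>
    set_tree (subt T' z) = set_tree (subt T z)"
proof (induction T "(x,y)" T' rule: rot.induct)
  case (rotR A B C)
  then have "x < y" by simp
  then show ?case using rotR.prems
    by (cases z x rule: linorder_cases; cases z y rule: linorder_cases) simp_all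
next
  case (rotL A B C)
  then have "x < y" by simp
  then show ?case using rotL.prems
    by (cases z x rule: linorder_cases; cases z y rule: linorder_cases) simp_all
next
  case (inL l l' a r)
  have s: "set_tree l' = set_tree l" using rot_set[OF inL.hyps(1)] .
  have "bst l" using inL.prems by simp
  then show ?case using inL.hyps(2) inL.prems s by simp
next
  case (inR r r' l a)
  have s: "set_tree r' = set_tree r" using rot_set[OF inR.hyps(1)] .
  have "bst r" using inR.prems by simp
  then show ?case using inR.hyps(2) inR.prems s by simp
qed


lemma rots_inorder: "rots T es T' \<Longrightarrow> inorder T' = inorder T"
  by (induction rule: rots.induct) (auto dest: rot_inorder)

lemma rots_set: "rots T es T' \<Longrightarrow> set_tree T' = set_tree T"
  by (metis rots_inorder set_inorder)

lemma rots_bst: "rots T es T' \<Longrightarrow> bst T \<Longrightarrow> bst T'"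
  by (metis rots_inorder bst_iff_sorted_wrt_less)

lemma edge_nodes_Nil[simp]: "edge_nodes [] = {}"
  by (simp add: edge_nodes_def)

lemma edge_nodes_Cons[simp]: "edge_nodes (e # es) = {fst e, snd e} \<union> edge_nodes es"
  by (auto simp add: edge_nodes_def)

lemma rots_ends: "rots T es T' \<Longrightarrow> edge_nodes es \<subseteq> set_tree T"
proof (induction rule: rots.induct)
  case (rots_nil T) then show ?case by simp
next
  case (rots_cons T e T1 es T2)
  obtain a b where e: "e = (a,b)" by fastforce
  then show ?case using rot_ends[of T a b T1] rots_cons rot_set[OF rots_cons.hyps(1)] by auto
qed

lemma rots_desc: "rots T es T' \<Longrightarrow> bst T \<Longrightarrow> z \<notin> edge_nodes es \<Longrightarrow>
    set_tree (subt T' z) = set_tree (subt T z)"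
proof (induction rule: rots.induct)
  case (rots_nil T) then show ?case by simp
next
  case (rots_cons T e T1 es T2)
  obtain a b where e: "e = (a,b)" by fastforce
  have "bst T1" using rot_bst rots_cons by blast
  then have "set_tree (subt T2 z) = set_tree (subt T1 z)" using rots_cons by simp
  also have "\<dots> = set_tree (subt T z)" using rot_desc[of T a b T1 z] rots_cons e by auto
  finally show ?case .
qed

definition isl :: "nat tree \<Rightarrow> nat set \<Rightarrow> nat \<Rightarrow> bool" where
  "isl T S z \<longleftrightarrow> z \<in> S \<and> S \<subseteq> set_tree (subt T z)"

definition istp :: "nat tree \<Rightarrow> nat set \<Rightarrow> nat set \<Rightarrow> nat \<Rightarrow> bool" where
  "istp T L R z \<longleftrightarrow> (isl T L z \<or> isl T R z) \<and> \<not> (L \<union> R \<subseteq> set_tree (subt T z))"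

lemma istp_exists:
  assumes "bst T" "conv (set_tree T) L" "conv (set_tree T) R" "L \<noteq> {}" "R \<noteq> {}" "L \<inter> R = {}"
  shows "\<exists>z. istp T L R z"
proof -
  obtain l where l: "l \<in> L" "L \<subseteq> set_tree (subt T l)" using lca_exists assms by blast
  obtain r where r: "r \<in> R" "R \<subseteq> set_tree (subt T r)" using lca_exists assms by blast
  show ?thesis
  proof (cases "L \<union> R \<subseteq> set_tree (subt T l)")
    case False then show ?thesis using l unfolding istp_def isl_def by blast
  next
    case True
    show ?thesis
    proof (cases "L \<union> R \<subseteq> set_tree (subt T r)")
      case False then show ?thesis using r unfolding istp_def isl_def by blast
    next
      case True2: True
      have "r \<in> set_tree (subt T l)" using True r by blast
      moreover have "l \<in> set_tree (subt T r)" using True2 l by blast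
      ultimately have "l = r" using desc_antisym assms(1) by blast
      then show ?thesis using l r assms(6) by blast
    qed
  qed
qed

lemma isl_unique: "bst T \<Longrightarrow> isl T S z1 \<Longrightarrow> isl T S z2 \<Longrightarrow> z1 = z2"
  unfolding isl_def using desc_antisym by blast

lemma istp_unique:
  assumes "bst T" "conv (set_tree T) (L \<union> R)" "L \<inter> R = {}"
    and "istp T L R z1" "istp T L R z2"
  shows "z1 = z2"
proof -
  have ne: "L \<union> R \<noteq> {}" using assms(4) unfolding istp_def isl_def by blast
  obtain u where u: "u \<in> L \<union> R" "L \<union> R \<subseteq> set_tree (subt T u)" using lca_exists[OF assms(1,2) ne] by blast
  have cL: "\<not> isl T L z" if "u \<in> L" "istp T L R z" for z
  proof
    assume h: "isl T L z"
    have "isl T L u" using u that(1) unfolding isl_def by blast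
    then have "u = z" using isl_unique assms(1) h by blast
    then show False using u that(2) unfolding istp_def by blast
  qed
  have cR: "\<not> isl T R z" if "u \<in> R" "istp T L R z" for z
  proof
    assume h: "isl T R z"
    have "isl T R u" using u that(1) unfolding isl_def by blast
    then have "u = z" using isl_unique assms(1) h by blast
    then show False using u that(2) unfolding istp_def by blast
  qed
  show ?thesis
  proof (cases "u \<in> L")
    case True
    then have "isl T R z1" "isl T R z2" using cL assms(4,5) unfolding istp_def by blast+
    then show ?thesis using isl_unique assms(1) by blast
  next
    case False
    then have "u \<in> R" using u by blast
    then have "isl T L z1" "isl T L z2" using cR assms(4,5) unfolding istp_def by blast+
    then show ?thesis using isl_unique assms(1) by blast
  qed
qed

lemma istp_rots: "rots T es T' \<Longrightarrow> bst T \<Longrightarrow> z \<notin> edge_nodes es \<Longrightarrow> istp T L R z \<Longrightarrow> istp T' L R z"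
  unfolding istp_def isl_def using rots_desc by simp

lemma conv_subt: "bst T \<Longrightarrow> conv (set_tree T) (set_tree (subt T v))"
proof (induction T)
  case Leaf then show ?case by (simp add: conv_def)
next
  case (Node l a r)
  have l: "\<forall>y\<in>set_tree l. y < a" and r: "\<forall>y\<in>set_tree r. a < y" and bl: "bst l" and br: "bst r"
    using Node.prems(1) by auto
  show ?case
  proof (cases "v = a")
    case True then show ?thesis unfolding conv_def by simp
  next
    case False
    show ?thesis
    proof (cases "v < a")
      case True
      have c: "conv (set_tree l) (set_tree (subt l v))" using Node.IH(1) bl by blast
      have sub: "set_tree (subt l v) \<subseteq> set_tree l" by (rule subt_set_sub)
      have "subt (Node l a r) v = subt l v" using True False by simp
      moreover have "conv (set_tree (Node l a r)) (set_tree (subt l v))"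
        unfolding conv_def
      proof (intro conjI ballI impI)
        show "set_tree (subt l v) \<subseteq> set_tree (Node l a r)" using sub by auto
      next
        fix a' c' b assume h: "a' \<in> set_tree (subt l v)" "c' \<in> set_tree (subt l v)"
          "b \<in> set_tree (Node l a r)" "a' \<le> b \<and> b \<le> c'"
        have "c' < a" using h(2) sub l by blast
        then have "b \<in> set_tree l" using h(3,4) r by auto
        then show "b \<in> set_tree (subt l v)" using convD[OF c h(1,2)] h(4) by blast
      qed
      ultimately show ?thesis by simp
    next
      case c0: False
      have c: "conv (set_tree r) (set_tree (subt r v))" using Node.IH(2) br by blast
      have sub: "set_tree (subt r v) \<subseteq> set_tree r" by (rule subt_set_sub)
      have "subt (Node l a r) v = subt r v" using c0 False by simp
      moreover have "conv (set_tree (Node l a r)) (set_tree (subt r v))"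
        unfolding conv_def
      proof (intro conjI ballI impI)
        show "set_tree (subt r v) \<subseteq> set_tree (Node l a r)" using sub by auto
      next
        fix a' c' b assume h: "a' \<in> set_tree (subt r v)" "c' \<in> set_tree (subt r v)"
          "b \<in> set_tree (Node l a r)" "a' \<le> b \<and> b \<le> c'"
        have "a < a'" using h(1) sub r by blast
        then have "b \<in> set_tree r" using h(3,4) l by auto
        then show "b \<in> set_tree (subt r v)" using convD[OF c h(1,2)] h(4) by blast
      qed
      ultimately show ?thesis by simp
    qed
  qed
qed


definition LL :: "nat tree \<Rightarrow> nat \<Rightarrow> nat set" where
  "LL P y = (case subt P y of Leaf \<Rightarrow> {} | Node l _ _ \<Rightarrow> insert y (set_tree l))"
definition RR :: "nat tree \<Rightarrow> nat \<Rightarrow> nat set" where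
  "RR P y = (case subt P y of Leaf \<Rightarrow> {} | Node _ _ r \<Rightarrow> set_tree r)"
abbreviation II :: "nat tree \<Rightarrow> nat \<Rightarrow> nat set" where
  "II P y \<equiv> set_tree (subt P y)"

lemma LLRR:
  assumes "bst P" "y \<in> set_tree P"
  shows "LL P y \<union> RR P y = II P y" "LL P y \<inter> RR P y = {}" "y \<in> LL P y"
    "\<And>x. x \<in> II P y \<Longrightarrow> x \<in> LL P y \<longleftrightarrow> x \<le> y"
    "conv (set_tree P) (LL P y)" "conv (set_tree P) (RR P y)" "conv (set_tree P) (II P y)"
proof -
  obtain l r where s: "subt P y = Node l y r" using subt_in assms by blast
  have b: "bst (Node l y r)" using subt_bst[OF assms(1), of y] s by simp
  then have l: "\<forall>x\<in>set_tree l. x < y" and r: "\<forall>x\<in>set_tree r. y < x" by auto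
  have LLe: "LL P y = insert y (set_tree l)" and RRe: "RR P y = set_tree r" using s by (simp_all add: LL_def RR_def)
  show "LL P y \<union> RR P y = II P y" using s LLe RRe by auto
  show "LL P y \<inter> RR P y = {}" using LLe RRe l r by fastforce
  show "y \<in> LL P y" using LLe by simp
  show "\<And>x. x \<in> II P y \<Longrightarrow> x \<in> LL P y \<longleftrightarrow> x \<le> y" using s LLe l r by fastforce
  have cI: "conv (set_tree P) (II P y)" using conv_subt assms(1) by blast
  then show "conv (set_tree P) (II P y)" .
  show "conv (set_tree P) (LL P y)" unfolding conv_def
  proof (intro conjI ballI impI)
    show "LL P y \<subseteq> set_tree P" using LLe s subt_set_sub[of P y] by auto
  next
    fix a c b assume h: "a \<in> LL P y" "c \<in> LL P y" "b \<in> set_tree P" "a \<le> b \<and> b \<le> c"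
    have "b \<in> II P y" using convD[OF cI, of a c b] h LLe s by auto
    moreover have "b \<le> y" using h(2,4) LLe l by fastforce
    ultimately show "b \<in> LL P y" using s LLe r by fastforce
  qed
  show "conv (set_tree P) (RR P y)" unfolding conv_def
  proof (intro conjI ballI impI)
    show "RR P y \<subseteq> set_tree P" using RRe s subt_set_sub[of P y] by auto
  next
    fix a c b assume h: "a \<in> RR P y" "c \<in> RR P y" "b \<in> set_tree P" "a \<le> b \<and> b \<le> c"
    have "b \<in> II P y" using convD[OF cI, of a c b] h RRe s by auto
    moreover have "y < b" using h(1,4) RRe r by fastforce
    ultimately show "b \<in> RR P y" using s RRe l by fastforce
  qed
qed

definition tpf :: "nat tree \<Rightarrow> nat tree \<Rightarrow> nat \<Rightarrow> nat" where
  "tpf T P y = (THE z. istp T (LL P y) (RR P y) z)"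

lemma tpf_eq:
  assumes "bst T" "set_tree T = set_tree P" "bst P" "y \<in> set_tree P" "istp T (LL P y) (RR P y) z"
  shows "tpf T P y = z"
proof -
  have "\<And>z'. istp T (LL P y) (RR P y) z' \<Longrightarrow> z' = z"
    using istp_unique[OF assms(1) _ _ _ assms(5)] LLRR[OF assms(3,4)] assms(2) by metis
  then show ?thesis unfolding tpf_def using assms(5) by (rule the_equality[rotated])
qed

lemma tpf_spec:
  assumes "bst T" "set_tree T = set_tree P" "bst P" "y \<in> set_tree P" "RR P y \<noteq> {}"
  shows "istp T (LL P y) (RR P y) (tpf T P y)"
proof -
  obtain z where "istp T (LL P y) (RR P y) z"
    using istp_exists[OF assms(1)] LLRR[OF assms(3,4)] assms(2,5) by (metis empty_iff)
  then show ?thesis using tpf_eq[OF assms(1-4)] by simp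
qed

lemma tp_distinct_aux:
  assumes "bst T" "set_tree T = set_tree P" "bst P" "y \<in> set_tree P" "y' \<in> set_tree P" "y \<noteq> y'"
    "istp T (LL P y) (RR P y) z" "istp T (LL P y') (RR P y') z"
    "y' \<in> II P y"
  shows False
proof -
  obtain l r where s: "subt P y = Node l y r" using subt_in assms by blast
  have b: "bst (Node l y r)" using subt_bst[OF assms(3), of y] s by simp
  have LLe: "LL P y = insert y (set_tree l)" and RRe: "RR P y = set_tree r" using s by (simp_all add: LL_def RR_def)
  have zI: "z \<in> II P y'" using assms(8) LLRR[OF assms(3,5)] unfolding istp_def isl_def by blast
  have ss: "subt P y' = subt (Node l y r) y'" using subt_subt[OF assms(3,9)] s by simp
  have dis: "LL P y \<inter> RR P y = {}" using LLRR[OF assms(3,4)] by blast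
  have ncov: "\<not> II P y' \<subseteq> set_tree (subt T z)" using assms(8) LLRR[OF assms(3,5)] unfolding istp_def by blast
  have "y' \<in> set_tree l \<or> y' \<in> set_tree r" using assms(6,9) s by auto
  then show False
  proof
    assume h: "y' \<in> set_tree l"
    then have "y' < y" using b by auto
    then have "II P y' \<subseteq> set_tree l" using ss subt_set_sub[of l y'] by auto
    then have sub: "II P y' \<subseteq> LL P y" using LLe by auto
    then have "z \<in> LL P y" using zI by blast
    then have "isl T (LL P y) z" using assms(7) dis unfolding istp_def isl_def by blast
    then show False using sub ncov unfolding isl_def by blast
  next
    assume h: "y' \<in> set_tree r"
    then have "y < y'" using b by auto
    then have "II P y' \<subseteq> set_tree r" using ss subt_set_sub[of r y'] by auto
    then have sub: "II P y' \<subseteq> RR P y" using RRe by auto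
    then have "z \<in> RR P y" using zI by blast
    then have "isl T (RR P y) z" using assms(7) dis unfolding istp_def isl_def by blast
    then show False using sub ncov unfolding isl_def by blast
  qed
qed

lemma tp_distinct:
  assumes "bst T" "set_tree T = set_tree P" "bst P" "y \<in> set_tree P" "y' \<in> set_tree P" "y \<noteq> y'"
    "istp T (LL P y) (RR P y) z" "istp T (LL P y') (RR P y') z"
  shows False
proof -
  have zI: "z \<in> II P y" "z \<in> II P y'" using assms(7,8) LLRR[OF assms(3,4)] LLRR[OF assms(3,5)]
    unfolding istp_def isl_def by blast+
  have "y \<in> II P y' \<or> y' \<in> II P y" using desc_nested[OF assms(3) zI] .
  then show False
    using tp_distinct_aux[OF assms(1-6,7,8)] tp_distinct_aux[OF assms(1-3,5,4) _ assms(8,7)] assms(6) by metis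
qed


fun alt :: "('a \<Rightarrow> bool) \<Rightarrow> 'a list \<Rightarrow> bool" where
  "alt p [] = True"
| "alt p [x] = True"
| "alt p (x # y # zs) = (p x \<noteq> p y \<and> alt p (y # zs))"

lemma alt_tl: "alt p (x # xs) \<Longrightarrow> alt p xs"
  by (cases xs) auto

definition Bv :: "bool \<Rightarrow> ('a \<Rightarrow> bool) \<Rightarrow> 'a list \<Rightarrow> nat" where
  "Bv s p xs = (case xs of [] \<Rightarrow> 0 | x # _ \<Rightarrow> (length xs + (if p x = s then 1 else 0)) div 2)"

lemma Bv_ge: "length xs div 2 \<le> Bv s p xs"
  by (cases xs) (auto simp: Bv_def)

lemma Bv1: "Bv s p (x # xs) \<le> 1 + Bv s' p xs"
proof -
  have "Bv s p (x # xs) \<le> (length xs + 2) div 2" by (auto simp: Bv_def)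
  also have "\<dots> \<le> 1 + length xs div 2" by simp
  also have "\<dots> \<le> 1 + Bv s' p xs" using Bv_ge by simp
  finally show ?thesis .
qed

lemma Bv2: "Bv s p xs \<le> 1 + Bv s' p xs"
proof -
  have "Bv s p xs \<le> (length xs + 1) div 2" by (cases xs) (auto simp: Bv_def)
  also have "\<dots> \<le> 1 + length xs div 2" by simp
  also have "\<dots> \<le> 1 + Bv s' p xs" using Bv_ge by simp
  finally show ?thesis .
qed

lemma Bv3: "alt p (x # xs) \<Longrightarrow> p x \<noteq> s \<Longrightarrow> Bv s p (x # xs) \<le> Bv s p xs"
  by (cases xs) (auto simp: Bv_def)

definition Bf :: "nat tree \<Rightarrow> nat tree \<Rightarrow> nat \<Rightarrow> nat list \<Rightarrow> nat" where
  "Bf T P y X = Bv (tpf T P y \<le> y) (\<lambda>x. x \<le> y) (filter (\<lambda>x. x \<in> II P y) X)"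

lemma min_subtree_sup:
  assumes "bst T" "S \<subseteq> set_tree T" shows "S \<subseteq> min_subtree T S"
proof
  fix s assume "s \<in> S"
  then have "anc T s s" using assms subt_self unfolding anc_def by blast
  then show "s \<in> min_subtree T S" unfolding min_subtree_def using \<open>s \<in> S\<close> by blast
qed

lemma path_nodes_sub: "path_nodes T x \<subseteq> set_tree T"
  unfolding path_nodes_def anc_def by blast

lemma step_lower:
  assumes "bst T" "set_tree T = set_tree P" "bst P" "Y \<subseteq> set_tree P" "finite Y"
    "\<forall>y\<in>Y. RR P y \<noteq> {}" "rots T es T'"
    "\<forall>y\<in>Y. alt (\<lambda>x. x \<le> y) (filter (\<lambda>x. x \<in> II P y) (x # xs))"
  shows "(\<Sum>y\<in>Y. Bf T P y (x # xs)) \<le> step_cost T x es + (\<Sum>y\<in>Y. Bf T' P y xs)"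
proof -
  define Tc where "Tc = path_nodes T x \<union> edge_nodes es"
  have bT': "bst T'" using rots_bst assms by blast
  have sT': "set_tree T' = set_tree P" using rots_set assms by metis
  have fp: "finite (path_nodes T x)" using finite_subset[OF path_nodes_sub] by simp
  have fe: "finite (edge_nodes es)" by (simp add: edge_nodes_def)
  have fin: "finite Tc" unfolding Tc_def using fp fe by simp
  have "Tc \<subseteq> path_nodes T x \<union> min_subtree T (edge_nodes es)"
    unfolding Tc_def using min_subtree_sup[OF assms(1) rots_ends[OF assms(7)]] by (rule Un_mono[OF subset_refl])
  moreover have "min_subtree T (edge_nodes es) \<subseteq> set_tree T"
  proof
    fix v assume "v \<in> min_subtree T (edge_nodes es)"
    then have "\<exists>s\<in>edge_nodes es. anc T v s" unfolding min_subtree_def by simp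
    then show "v \<in> set_tree T" unfolding anc_def by blast
  qed
  then have "finite (min_subtree T (edge_nodes es))" by (rule finite_subset) simp
  then have "finite (path_nodes T x \<union> min_subtree T (edge_nodes es))" using fp by simp
  ultimately have c1: "card Tc \<le> step_cost T x es" unfolding step_cost_def by (rule card_mono[rotated])
  have inj: "inj_on (\<lambda>y. tpf T P y) {y\<in>Y. tpf T P y \<in> Tc}"
  proof (rule inj_onI)
    fix y y' assume h: "y \<in> {y\<in>Y. tpf T P y \<in> Tc}" "y' \<in> {y\<in>Y. tpf T P y \<in> Tc}" "tpf T P y = tpf T P y'"
    show "y = y'"
    proof (rule ccontr)
      assume ne: "y \<noteq> y'"
      have yP: "y \<in> set_tree P" "y' \<in> set_tree P" using h assms(4) by auto
      have R: "RR P y \<noteq> {}" "RR P y' \<noteq> {}" using h assms(6) by auto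
      have "istp T (LL P y) (RR P y) (tpf T P y)" using tpf_spec[OF assms(1-3) yP(1) R(1)] .
      moreover have "istp T (LL P y') (RR P y') (tpf T P y)" using tpf_spec[OF assms(1-3) yP(2) R(2)] h(3) by simp
      ultimately show False using tp_distinct[OF assms(1-3) yP ne] by blast
    qed
  qed
  have c2: "card {y\<in>Y. tpf T P y \<in> Tc} \<le> card Tc"
    using card_inj_on_le[OF inj _ fin] by blast
  have per: "Bf T P y (x # xs) \<le> (if tpf T P y \<in> Tc then 1 else 0) + Bf T' P y xs" if yY: "y \<in> Y" for y
  proof -
    have yP: "y \<in> set_tree P" using yY assms(4) by blast
    define z where "z = tpf T P y"
    have zt: "istp T (LL P y) (RR P y) z" unfolding z_def using tpf_spec[OF assms(1-3) yP] assms(6) yY by blast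
    note LR = LLRR[OF assms(3) yP]
    show ?thesis
    proof (cases "z \<in> Tc")
      case True
      then show ?thesis unfolding Bf_def z_def[symmetric] by (simp add: Bv1[simplified] Bv2[simplified])
    next
      case False
      then have "z \<notin> edge_nodes es" unfolding Tc_def by blast
      then have "istp T' (LL P y) (RR P y) z" using istp_rots[OF assms(7,1)] zt by blast
      then have z': "tpf T' P y = z" using tpf_eq[OF bT' sT' assms(3) yP] by blast
      show ?thesis
      proof (cases "x \<in> II P y")
        case xI: True
        have "(x \<le> y) \<noteq> (z \<le> y)"
        proof
          assume eq: "(x \<le> y) = (z \<le> y)"
          have zI: "z \<in> II P y" using zt LR unfolding istp_def isl_def by blast
          have zT: "z \<in> set_tree T" using zI assms(2) subt_set_sub[of P y] by blast
          have "x \<in> set_tree (subt T z)"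
          proof (cases "z \<le> y")
            case True
            then have "z \<in> LL P y" using LR(4) zI by blast
            then have "isl T (LL P y) z" using zt LR(2) unfolding istp_def isl_def by blast
            moreover have "x \<in> LL P y" using LR(4) xI eq True by blast
            ultimately show ?thesis unfolding isl_def by blast
          next
            case False
            then have "z \<in> RR P y" using LR(4,1) zI by blast
            then have "isl T (RR P y) z" using zt LR(2) unfolding istp_def isl_def by blast
            moreover have "x \<in> RR P y" using LR(4,1) xI eq False by blast
            ultimately show ?thesis unfolding isl_def by blast
          qed
          then have "z \<in> path_nodes T x" using zT unfolding path_nodes_def anc_def by blast
          then show False using \<open>z \<notin> Tc\<close> unfolding Tc_def by blast
        qed
        moreover have "alt (\<lambda>x. x \<le> y) (x # filter (\<lambda>x. x \<in> II P y) xs)"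
          using bspec[OF assms(8) yY] xI by simp
        ultimately show ?thesis using Bv3 xI False z' unfolding Bf_def z_def[symmetric] by simp
      next
        case False
        then show ?thesis using \<open>z \<notin> Tc\<close> z' unfolding Bf_def z_def[symmetric] by simp
      qed
    qed
  qed
  have "(\<Sum>y\<in>Y. Bf T P y (x # xs)) \<le> (\<Sum>y\<in>Y. (if tpf T P y \<in> Tc then 1 else 0) + Bf T' P y xs)"
    using per by (rule sum_mono)
  also have "\<dots> = card {y\<in>Y. tpf T P y \<in> Tc} + (\<Sum>y\<in>Y. Bf T' P y xs)"
    using assms(5) by (simp add: sum.distrib sum.If_cases Int_def conj_commute)
  finally show ?thesis using c1 c2 by linarith
qed

lemma lower_exec:
  "exec T X c \<Longrightarrow> bst T \<Longrightarrow> set_tree T = set_tree P \<Longrightarrow> bst P \<Longrightarrow> Y \<subseteq> set_tree P \<Longrightarrow> finite Y \<Longrightarrow>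
    \<forall>y\<in>Y. RR P y \<noteq> {} \<Longrightarrow> \<forall>y\<in>Y. alt (\<lambda>x. x \<le> y) (filter (\<lambda>x. x \<in> II P y) X) \<Longrightarrow>
    (\<Sum>y\<in>Y. Bf T P y X) \<le> c"
proof (induction rule: exec.induct)
  case (exec_nil T) then show ?case by (simp add: Bf_def Bv_def)
next
  case (exec_cons T es T' xs c x)
  have "bst T'" "set_tree T' = set_tree P" using rots_bst rots_set exec_cons by metis+
  moreover have "\<forall>y\<in>Y. alt (\<lambda>x. x \<le> y) (filter (\<lambda>x. x \<in> II P y) xs)"
    using exec_cons.prems(7) by (auto split: if_splits dest: alt_tl)
  ultimately have "(\<Sum>y\<in>Y. Bf T' P y xs) \<le> c" using exec_cons by blast
  moreover have "(\<Sum>y\<in>Y. Bf T P y (x # xs)) \<le> step_cost T x es + (\<Sum>y\<in>Y. Bf T' P y xs)"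
    using step_lower exec_cons by blast
  ultimately show ?case by linarith
qed


lemma min_subtree_empty[simp]: "min_subtree T {} = {}"
  by (simp add: min_subtree_def)

lemma exec_static: "exec T X (sum_list (map (\<lambda>x. card (path_nodes T x)) X))"
proof (induction X)
  case Nil then show ?case using exec_nil by simp
next
  case (Cons x X)
  have "exec T (x # X) (step_cost T x [] + sum_list (map (\<lambda>x. card (path_nodes T x)) X))"
    using exec_cons[OF rots_nil Cons] .
  then show ?case by (simp add: step_cost_def)
qed

lemma opt_upper: "opt_cost T X \<le> sum_list (map (\<lambda>x. card (path_nodes T x)) X)"
  unfolding opt_cost_def by (rule Least_le) (rule exec_static)

lemma opt_exec: "exec T X (opt_cost T X)"
  unfolding opt_cost_def by (rule LeastI) (rule exec_static)

lemma path_nodes_eq: "path_nodes T x = {v \<in> set_tree T. x \<in> set_tree (subt T v)}"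
  unfolding path_nodes_def anc_def by blast

definition cnt :: "nat list \<Rightarrow> nat set \<Rightarrow> nat" where
  "cnt X S = length (filter (\<lambda>x. x \<in> S) X)"

lemma count_swap: "finite K \<Longrightarrow>
  sum_list (map (\<lambda>x. card {v\<in>K. x \<in> F v}) X) = (\<Sum>v\<in>K. cnt X (F v))"
proof (induction X)
  case Nil then show ?case by (simp add: cnt_def)
next
  case (Cons x X)
  have "card {v\<in>K. x \<in> F v} = (\<Sum>v\<in>K. if x \<in> F v then 1 else 0)"
    using Cons.prems by (simp add: sum.If_cases Int_def conj_commute)
  moreover have "(\<Sum>v\<in>K. length (filter (\<lambda>x. x \<in> F v) (x # X))) =
     (\<Sum>v\<in>K. (if x \<in> F v then 1 else 0) + length (filter (\<lambda>x. x \<in> F v) X))"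
    by (intro sum.cong) auto
  ultimately show ?case using Cons by (simp add: cnt_def sum.distrib)
qed

fun full :: "'a tree \<Rightarrow> bool" where
  "full Leaf = True"
| "full (Node l a r) = ((l = Leaf) = (r = Leaf) \<and> full l \<and> full r)"

fun wt :: "'a tree \<Rightarrow> real" where
  "wt Leaf = 0"
| "wt (Node l a r) = (if l = Leaf \<and> r = Leaf then 0 else 1 + (wt l + wt r) / 2)"

definition halving :: "nat list \<Rightarrow> nat tree \<Rightarrow> bool" where
  "halving X Q \<longleftrightarrow> (\<forall>v\<in>set_tree Q. case subt Q v of Leaf \<Rightarrow> True | Node l _ r \<Rightarrow>
      (l \<noteq> Leaf \<longrightarrow> 2 * cnt X (set_tree l) = cnt X (set_tree (subt Q v)) \<and>
                      2 * cnt X (set_tree r) = cnt X (set_tree (subt Q v))))"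

lemma full_subt: "full T \<Longrightarrow> full (subt T v)"
  by (induction T) auto

lemma count_rec:
  "bst Q \<Longrightarrow> full Q \<Longrightarrow> halving X Q \<Longrightarrow>
    (\<Sum>v\<in>set_tree Q. real (cnt X (set_tree (subt Q v)))) = real (cnt X (set_tree Q)) * (wt Q + 1) \<and>
    (\<Sum>v\<in>inner_keys Q. real (cnt X (set_tree (subt Q v)))) = real (cnt X (set_tree Q)) * wt Q"
proof (induction Q)
  case Leaf then show ?case by (simp add: inner_keys_def cnt_def)
next
  case (Node l a r)
  show ?case
  proof (cases "l = Leaf")
    case True
    then have "r = Leaf" using Node.prems(2) by simp
    then have "inner_keys (Node l a r) = {}" using True by (auto simp: inner_keys_def)
    then show ?thesis using True \<open>r = Leaf\<close> by simp
  next
    case False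
    then have rne: "r \<noteq> Leaf" using Node.prems(2) by simp
    have lt: "\<forall>x\<in>set_tree l. x < a" and gt: "\<forall>x\<in>set_tree r. a < x" and bl: "bst l" and br: "bst r"
      using Node.prems(1) by auto
    have fl: "full l" and fr: "full r" using Node.prems(2) by auto
    have sl: "\<And>v. v \<in> set_tree l \<Longrightarrow> subt (Node l a r) v = subt l v" using lt by auto
    have sr: "\<And>v. v \<in> set_tree r \<Longrightarrow> subt (Node l a r) v = subt r v" using gt by fastforce
    have hl: "halving X l" unfolding halving_def
    proof
      fix v assume v: "v \<in> set_tree l"
      then show "case subt l v of Leaf \<Rightarrow> True | Node l' _ r' \<Rightarrow>
        (l' \<noteq> Leaf \<longrightarrow> 2 * cnt X (set_tree l') = cnt X (set_tree (subt l v)) \<and>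
                      2 * cnt X (set_tree r') = cnt X (set_tree (subt l v)))"
        using bspec[OF Node.prems(3)[unfolded halving_def], of v] v unfolding sl[OF v] by simp
    qed
    have hr: "halving X r" unfolding halving_def
    proof
      fix v assume v: "v \<in> set_tree r"
      then show "case subt r v of Leaf \<Rightarrow> True | Node l' _ r' \<Rightarrow>
        (l' \<noteq> Leaf \<longrightarrow> 2 * cnt X (set_tree l') = cnt X (set_tree (subt r v)) \<and>
                      2 * cnt X (set_tree r') = cnt X (set_tree (subt r v)))"
        using bspec[OF Node.prems(3)[unfolded halving_def], of v] v unfolding sr[OF v] by simp
    qed
    have h2: "2 * cnt X (set_tree l) = cnt X (set_tree (Node l a r))"
      "2 * cnt X (set_tree r) = cnt X (set_tree (Node l a r))"
      using Node.prems(3) False unfolding halving_def by auto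
    note IHl = Node.IH(1)[OF bl fl hl] and IHr = Node.IH(2)[OF br fr hr]
    have dis: "a \<notin> set_tree l" "a \<notin> set_tree r" "set_tree l \<inter> set_tree r = {}" using lt gt by fastforce+
    let ?f = "\<lambda>v. real (cnt X (set_tree (subt (Node l a r) v)))"
    have "(\<Sum>v\<in>set_tree (Node l a r). ?f v) = ?f a + (\<Sum>v\<in>set_tree l. ?f v) + (\<Sum>v\<in>set_tree r. ?f v)"
      using dis by (simp add: sum.union_disjoint)
    also have "(\<Sum>v\<in>set_tree l. ?f v) = (\<Sum>v\<in>set_tree l. real (cnt X (set_tree (subt l v))))"
      using sl by (intro sum.cong) auto
    also have "(\<Sum>v\<in>set_tree r. ?f v) = (\<Sum>v\<in>set_tree r. real (cnt X (set_tree (subt r v))))"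
      using sr by (intro sum.cong) auto
    finally have s1: "(\<Sum>v\<in>set_tree (Node l a r). ?f v) =
       real (cnt X (set_tree (Node l a r))) + real (cnt X (set_tree l)) * (wt l + 1) + real (cnt X (set_tree r)) * (wt r + 1)"
      using IHl IHr by simp
    have dis: "a \<notin> set_tree l" "a \<notin> set_tree r" "set_tree l \<inter> set_tree r = {}" using lt gt by fastforce+
    have ik: "inner_keys (Node l a r) = insert a (inner_keys l \<union> inner_keys r)"
    proof -
      have "inner_keys (Node l a r) = {v \<in> set_tree (Node l a r). subt (Node l a r) v \<noteq> Node Leaf v Leaf}"
        by (simp add: inner_keys_def)
      also have "\<dots> = insert a (inner_keys l \<union> inner_keys r)"
      proof (rule set_eqI)
        fix v
        consider "v = a" | "v \<in> set_tree l" | "v \<in> set_tree r" | "v \<notin> set_tree (Node l a r)" by auto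
        then show "v \<in> {v \<in> set_tree (Node l a r). subt (Node l a r) v \<noteq> Node Leaf v Leaf} \<longleftrightarrow>
                   v \<in> insert a (inner_keys l \<union> inner_keys r)"
        proof cases
          case 1 then show ?thesis using False by simp
        next
          case 2 then have "v < a" using lt by blast
          then show ?thesis using 2 dis unfolding inner_keys_def by auto
        next
          case 3 then have "a < v" using gt by blast
          then show ?thesis using 3 dis unfolding inner_keys_def by auto
        next
          case 4 then show ?thesis unfolding inner_keys_def by auto
        qed
      qed
      finally show ?thesis .
    qed
    have ikl: "inner_keys l \<subseteq> set_tree l" "inner_keys r \<subseteq> set_tree r" by (auto simp: inner_keys_def)
    have fin: "finite (inner_keys l)" "finite (inner_keys r)" using finite_subset[OF ikl(1)] finite_subset[OF ikl(2)] by simp_all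
    have dis2: "a \<notin> inner_keys l \<union> inner_keys r" "inner_keys l \<inter> inner_keys r = {}" using dis ikl by blast+
    have "(\<Sum>v\<in>inner_keys (Node l a r). ?f v) = ?f a + (\<Sum>v\<in>inner_keys l. ?f v) + (\<Sum>v\<in>inner_keys r. ?f v)"
      unfolding ik using dis2 fin by (simp add: sum.union_disjoint)
    also have "(\<Sum>v\<in>inner_keys l. ?f v) = (\<Sum>v\<in>inner_keys l. real (cnt X (set_tree (subt l v))))"
    proof (intro sum.cong refl)
      fix v assume "v \<in> inner_keys l"
      then have "v \<in> set_tree l" using ikl by blast
      then show "?f v = real (cnt X (set_tree (subt l v)))" by (simp only: sl)
    qed
    also have "(\<Sum>v\<in>inner_keys r. ?f v) = (\<Sum>v\<in>inner_keys r. real (cnt X (set_tree (subt r v))))"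
    proof (intro sum.cong refl)
      fix v assume "v \<in> inner_keys r"
      then have "v \<in> set_tree r" using ikl by blast
      then show "?f v = real (cnt X (set_tree (subt r v)))" by (simp only: sr)
    qed
    finally have s2: "(\<Sum>v\<in>inner_keys (Node l a r). ?f v) =
       real (cnt X (set_tree (Node l a r))) + real (cnt X (set_tree l)) * wt l + real (cnt X (set_tree r)) * wt r"
      using IHl IHr by simp
    have wq: "wt (Node l a r) = 1 + (wt l + wt r) / 2" using False by simp
    have e1: "real (cnt X (set_tree l)) = real (cnt X (set_tree (Node l a r))) / 2"
     and e2: "real (cnt X (set_tree r)) = real (cnt X (set_tree (Node l a r))) / 2"
      using h2 by (simp_all add: field_simps flip: of_nat_mult)
    show ?thesis using s1 s2 unfolding wq e1 e2 by (simp add: field_simps)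
  qed
qed


fun chn :: "('a \<Rightarrow> 'a \<Rightarrow> bool) \<Rightarrow> 'a list \<Rightarrow> bool" where
  "chn R [] = True"
| "chn R [x] = True"
| "chn R (x # y # zs) = (R x y \<and> chn R (y # zs))"

lemma chn_iff: "chn R xs \<longleftrightarrow> (\<forall>i. Suc i < length xs \<longrightarrow> R (xs!i) (xs!Suc i))"
proof (induction R xs rule: chn.induct)
  case (1 R) then show ?case by simp
next
  case (2 R x) then show ?case by simp
next
  case (3 R x y zs)
  show ?case
  proof
    assume h: "chn R (x # y # zs)"
    show "\<forall>i. Suc i < length (x # y # zs) \<longrightarrow> R ((x # y # zs) ! i) ((x # y # zs) ! Suc i)"
    proof (intro allI impI)
      fix i assume i: "Suc i < length (x # y # zs)"
      show "R ((x # y # zs) ! i) ((x # y # zs) ! Suc i)"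
      proof (cases i)
        case 0 then show ?thesis using h by simp
      next
        case (Suc j) then show ?thesis using h 3 i by simp
      qed
    qed
  next
    assume h: "\<forall>i. Suc i < length (x # y # zs) \<longrightarrow> R ((x # y # zs) ! i) ((x # y # zs) ! Suc i)"
    have "R x y" using h[rule_format, of 0] by simp
    moreover have "\<forall>i. Suc i < length (y # zs) \<longrightarrow> R ((y # zs) ! i) ((y # zs) ! Suc i)"
    proof (intro allI impI)
      fix i assume "Suc i < length (y # zs)"
      then show "R ((y # zs) ! i) ((y # zs) ! Suc i)" using h[rule_format, of "Suc i"] by simp
    qed
    ultimately show "chn R (x # y # zs)" using 3 by simp
  qed
qed

lemma chn_mono: "chn R xs \<Longrightarrow> (\<And>a b. R a b \<Longrightarrow> R' a b) \<Longrightarrow> chn R' xs"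
  by (induction R xs rule: chn.induct) auto

lemma alt_chn: "alt s xs \<longleftrightarrow> chn (\<lambda>a b. s a \<noteq> s b) xs"
  by (induction xs rule: induct_list012) auto

lemma chn_app: "chn R (xs @ ys) \<Longrightarrow> xs \<noteq> [] \<Longrightarrow> ys \<noteq> [] \<Longrightarrow> R (last xs) (hd ys)"
proof (induction xs rule: induct_list012)
  case 1 then show ?case by simp
next
  case (2 x) then show ?case by (cases ys) auto
next
  case (3 x y zs) then show ?case by simp
qed

lemma chn_last: "chn (\<lambda>a b. s a \<noteq> s b) xs \<Longrightarrow> xs \<noteq> [] \<Longrightarrow>
   s (last xs) = (if even (length xs) then \<not> s (hd xs) else s (hd xs))"
proof (induction xs rule: induct_list012)
  case 1 then show ?case by simp
next
  case (2 x) then show ?case by simp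
next
  case (3 x y zs) then show ?case by auto
qed

lemma chn_count: "chn (\<lambda>a b. s a \<noteq> s b) xs \<Longrightarrow> even (length xs) \<Longrightarrow> 2 * length (filter s xs) = length xs"
proof (induction xs rule: induct_list012)
  case 1 then show ?case by simp
next
  case (2 x) then show ?case by simp
next
  case (3 x y zs)
  have "chn (\<lambda>a b. s a \<noteq> s b) zs" using 3(3) by (cases zs) auto
  then have "2 * length (filter s zs) = length zs" using 3 by simp
  then show ?case using 3(3) by auto
qed

definition RR2 :: "nat tree \<Rightarrow> nat tree \<Rightarrow> nat \<Rightarrow> nat \<Rightarrow> bool" where
  "RR2 l r a b \<longleftrightarrow> (a \<in> set_tree l \<and> b \<in> set_tree r) \<or> (a \<in> set_tree r \<and> b \<in> set_tree l)"

lemma chn_mem: "chn (RR2 l r) xs \<Longrightarrow> 2 \<le> length xs \<Longrightarrow> set xs \<subseteq> set_tree l \<union> set_tree r"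
proof (induction "RR2 l r" xs rule: chn.induct)
  case 1 then show ?case by simp
next
  case (2 x) then show ?case by simp
next
  case (3 x y zs)
  have "x \<in> set_tree l \<union> set_tree r" "y \<in> set_tree l \<union> set_tree r" using 3(2) by (auto simp: RR2_def)
  moreover have "set zs \<subseteq> set_tree l \<union> set_tree r"
  proof (cases zs)
    case Nil then show ?thesis by simp
  next
    case (Cons a as) then show ?thesis using 3 by simp
  qed
  ultimately show ?case by simp
qed

lemma ss_chn:
  assumes "strongly_stable P X" "v \<in> inner_keys P" "subt P v = Node l v r"
  shows "chn (RR2 l r) (filter (\<lambda>x. x \<in> II P v) X)"
proof -
  have "strongly_stable_node P X v" using assms(1,2) unfolding strongly_stable_def by blast
  then show ?thesis unfolding strongly_stable_node_def chn_iff RR2_def using assms(3) by (simp add: Let_def)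
qed

lemma rep_ss: "rep_stable P X \<Longrightarrow> strongly_stable P X \<and> strongly_stable P (X @ X)"
proof -
  assume h: "rep_stable P X"
  have "strongly_stable P (concat (replicate 1 X))" "strongly_stable P (concat (replicate 2 X))"
    using h unfolding rep_stable_def by auto
  then show ?thesis by (simp add: numeral_2_eq_2)
qed

lemma inner_struct:
  assumes "bst P" "full P" "v \<in> inner_keys P"
  obtains l r where "subt P v = Node l v r" "l \<noteq> Leaf" "r \<noteq> Leaf"
    "\<forall>x\<in>set_tree l. x < v" "\<forall>x\<in>set_tree r. v < x"
proof -
  have vP: "v \<in> set_tree P" using assms(3) unfolding inner_keys_def by blast
  obtain l r where s: "subt P v = Node l v r" using subt_in[OF assms(1) vP] by blast
  have "Node l v r \<noteq> Node Leaf v Leaf" using assms(3) s unfolding inner_keys_def by simp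
  moreover have "full (Node l v r)" using full_subt[OF assms(2), of v] s by simp
  ultimately have "l \<noteq> Leaf" "r \<noteq> Leaf" by auto
  moreover have "bst (Node l v r)" using subt_bst[OF assms(1), of v] s by simp
  ultimately show ?thesis using that s by auto
qed

lemma stable_facts:
  assumes "bst P" "full P" "rep_stable P X" "v \<in> inner_keys P"
  shows "alt (\<lambda>x. x \<le> v) (filter (\<lambda>x. x \<in> II P v) X)"
    "even (length (filter (\<lambda>x. x \<in> II P v) X))"
    "RR P v \<noteq> {}"
    "case subt P v of Leaf \<Rightarrow> True | Node l _ r \<Rightarrow>
      (l \<noteq> Leaf \<longrightarrow> 2 * cnt X (set_tree l) = cnt X (II P v) \<and>
                      2 * cnt X (set_tree r) = cnt X (II P v))"
proof -
  obtain l r where s: "subt P v = Node l v r" and ne: "l \<noteq> Leaf" "r \<noteq> Leaf"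
    and lt: "\<forall>x\<in>set_tree l. x < v" and gt: "\<forall>x\<in>set_tree r. v < x"
    using inner_struct[OF assms(1,2,4)] by blast
  have ss: "strongly_stable P X" "strongly_stable P (X @ X)" using rep_ss[OF assms(3)] by auto
  define Xv where "Xv = filter (\<lambda>x. x \<in> II P v) X"
  have c1: "chn (RR2 l r) Xv" using ss_chn[OF ss(1) assms(4) s] unfolding Xv_def .
  have c2: "chn (RR2 l r) (Xv @ Xv)" using ss_chn[OF ss(2) assms(4) s] unfolding Xv_def by simp
  have Rs: "\<And>a b. RR2 l r a b \<Longrightarrow> (a \<in> set_tree l) \<noteq> (b \<in> set_tree l)"
    using lt gt unfolding RR2_def by fastforce
  have Rv: "\<And>a b. RR2 l r a b \<Longrightarrow> (a \<le> v) \<noteq> (b \<le> v)"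
    using lt gt unfolding RR2_def by fastforce
  show "alt (\<lambda>x. x \<le> v) (filter (\<lambda>x. x \<in> II P v) X)"
    unfolding alt_chn Xv_def[symmetric] using chn_mono[OF c1 Rv] .
  have ev: "even (length Xv)"
  proof (cases "Xv = []")
    case True then show ?thesis by simp
  next
    case False
    have c3: "chn (\<lambda>a b. (a \<in> set_tree l) \<noteq> (b \<in> set_tree l)) (Xv @ Xv)" using chn_mono[OF c2 Rs] .
    have "(last Xv \<in> set_tree l) \<noteq> (hd Xv \<in> set_tree l)" using chn_app[OF c3 False False] .
    moreover have "chn (\<lambda>a b. (a \<in> set_tree l) \<noteq> (b \<in> set_tree l)) Xv" using chn_mono[OF c1 Rs] .
    ultimately show ?thesis using chn_last[of "\<lambda>a. a \<in> set_tree l" Xv] False by (auto split: if_splits)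
  qed
  then show "even (length (filter (\<lambda>x. x \<in> II P v) X))" unfolding Xv_def .
  show "RR P v \<noteq> {}" using s ne unfolding RR_def by (cases r) auto
  have sub: "set_tree l \<subseteq> II P v" "set_tree r \<subseteq> II P v" using s by auto
  have cl: "cnt X (set_tree l) = length (filter (\<lambda>x. x \<in> set_tree l) Xv)"
    unfolding cnt_def Xv_def filter_filter using sub by (metis (no_types, lifting) filter_cong subsetD)
  have cr: "cnt X (set_tree r) = length (filter (\<lambda>x. x \<in> set_tree r) Xv)"
    unfolding cnt_def Xv_def filter_filter using sub by (metis (no_types, lifting) filter_cong subsetD)
  have cI: "cnt X (II P v) = length Xv" unfolding cnt_def Xv_def ..
  have "2 * cnt X (set_tree l) = cnt X (II P v) \<and> 2 * cnt X (set_tree r) = cnt X (II P v)"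
  proof (cases "Xv = []")
    case True then show ?thesis using cl cr cI by simp
  next
    case False
    have "length (Xv @ Xv) \<ge> 2" using False by (cases Xv) auto
    then have mem: "set Xv \<subseteq> set_tree l \<union> set_tree r" using chn_mem[OF c2] by simp
    have h1: "2 * length (filter (\<lambda>x. x \<in> set_tree l) Xv) = length Xv"
      using chn_count[OF chn_mono[OF c1 Rs] ev] .
    have "filter (\<lambda>x. x \<in> set_tree r) Xv = filter (\<lambda>x. \<not> x \<in> set_tree l) Xv"
      using mem lt gt by (intro filter_cong) fastforce+
    then have "length (filter (\<lambda>x. x \<in> set_tree r) Xv) = length Xv - length (filter (\<lambda>x. x \<in> set_tree l) Xv)"
      using sum_length_filter_compl[of "\<lambda>x. x \<in> set_tree l" Xv] by simp
    then show ?thesis using h1 cl cr cI by simp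
  qed
  then show "case subt P v of Leaf \<Rightarrow> True | Node l _ r \<Rightarrow>
      (l \<noteq> Leaf \<longrightarrow> 2 * cnt X (set_tree l) = cnt X (II P v) \<and>
                      2 * cnt X (set_tree r) = cnt X (II P v))" using s by simp
qed


lemma lab_inorder: "inorder (lab t i) = [i..<i + size t]"
proof (induction t arbitrary: i)
  case Leaf then show ?case by simp
next
  case (Node l u r)
  have e1: "[i..<i + size l + (1 + size r)] = [i..<i + size l] @ [i + size l..<i + size l + (1 + size r)]"
    by (rule upt_add_eq_append) simp
  have e2: "[i + size l..<i + size l + (1 + size r)] = (i + size l) # [i + size l + 1..<i + size l + (1 + size r)]"
    using upt_conv_Cons[of "i + size l" "i + size l + (1 + size r)"] by simp
  have "[i..<i + size l] @ (i + size l) # [i + size l + 1..<i + size l + 1 + size r] = [i..<i + size (Node l u r)]"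
    using e1 e2 by (simp add: add.assoc)
  then show ?case using Node by simp
qed

lemma lab_size[simp]: "size (lab t i) = size t"
  by (induction t arbitrary: i) auto

lemma lab_Leaf[simp]: "lab t i = Leaf \<longleftrightarrow> t = Leaf"
  by (cases t) auto

lemma lab_full[simp]: "full (lab t i) = full t"
  by (induction t arbitrary: i) auto

lemma lab_wt[simp]: "wt (lab t i) = wt t"
  by (induction t arbitrary: i) auto

lemma lab_bst: "bst (lab t i)"
  unfolding bst_iff_sorted_wrt_less lab_inorder by (simp add: sorted_wrt_iff_nth_less)

lemma chain_ne[simp]: "chain i S \<noteq> Leaf"
  by (cases i) auto

lemma kr_shape_ne[simp]: "kr_shape k r \<noteq> Leaf"
  by (cases r) auto

lemma chain_full: "full S \<Longrightarrow> S \<noteq> Leaf \<Longrightarrow> full (chain i S)"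
  by (induction i) auto

lemma kr_shape_full: "full (kr_shape k r)"
  by (induction r) (auto intro: chain_full)

lemma chain_size: "size (chain i S) = 1 + i * (1 + size S)"
  by (induction i) auto

lemma kr_size: "k \<ge> 1 \<Longrightarrow> size (kr_shape k (Suc r)) = k * (size (kr_shape k r) + 1) + 1"
proof -
  assume k: "k \<ge> 1"
  have "size (kr_shape k (Suc r)) = size (kr_shape k r) + 1 + (1 + (k - 1) * (1 + size (kr_shape k r)))"
    by (simp add: chain_size)
  also have "\<dots> = k * (size (kr_shape k r) + 1) + 1" using k
    by (cases k) (auto simp: algebra_simps)
  finally show ?thesis .
qed

lemma kr_size_bounds: "k \<ge> 1 \<Longrightarrow> 2 * k ^ r \<le> size (kr_shape k r) + 1 \<and> size (kr_shape k r) + 1 \<le> 2 * (k + 1) ^ r"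
proof (induction r)
  case 0 then show ?case by simp
next
  case (Suc r)
  let ?N = "size (kr_shape k r)"
  have e: "size (kr_shape k (Suc r)) + 1 = k * (?N + 1) + 2" using kr_size Suc.prems by simp
  have "2 * k ^ Suc r = k * (2 * k ^ r)" by simp
  also have "\<dots> \<le> k * (?N + 1)" using Suc.IH[OF Suc.prems] by (intro mult_le_mono2) simp
  finally have a: "2 * k ^ Suc r \<le> size (kr_shape k (Suc r)) + 1" using e by linarith
  have "k * (?N + 1) + 2 \<le> (k + 1) * (?N + 1)" by (cases ?N) (auto simp: algebra_simps)
  also have "\<dots> \<le> (k + 1) * (2 * (k + 1) ^ r)" using Suc.IH[OF Suc.prems] by (intro mult_le_mono2) simp
  finally have b: "size (kr_shape k (Suc r)) + 1 \<le> 2 * (k + 1) ^ Suc r" using e by (simp add: algebra_simps)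
  show ?case using a b by blast
qed

lemma chain_wt: "S \<noteq> Leaf \<Longrightarrow> wt (chain i S) = (2 + wt S) * (1 - (1/2) ^ i)"
proof (induction i)
  case 0 then show ?case by simp
next
  case (Suc i)
  have "wt (chain (Suc i) S) = 1 + (wt (chain i S) + wt S) / 2" using Suc.prems by simp
  also have "\<dots> = (2 + wt S) * (1 - (1/2) ^ Suc i)" using Suc by (simp add: field_simps)
  finally show ?case .
qed

lemma kr_wt_step: "k \<ge> 1 \<Longrightarrow> wt (kr_shape k (Suc r)) = (2 + wt (kr_shape k r)) * (1 - (1/2) ^ k)"
proof -
  assume k: "k \<ge> 1"
  let ?W = "wt (kr_shape k r)"
  have "wt (kr_shape k (Suc r)) = 1 + (?W + (2 + ?W) * (1 - (1/2) ^ (k - 1))) / 2"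
    by (simp add: chain_wt)
  also have "\<dots> = (2 + ?W) * (1 - (1/2) ^ k)"
  proof -
    obtain j where j: "k = Suc j" using k by (cases k) auto
    show ?thesis unfolding j by (simp add: field_simps)
  qed
  finally show ?thesis .
qed

lemma kr_wt: "k \<ge> 1 \<Longrightarrow> wt (kr_shape k r) = (2 ^ (k + 1) - 2) * (1 - (1 - (1/2) ^ k) ^ r)"
proof (induction r)
  case 0 then show ?case by simp
next
  case (Suc r)
  let ?q = "1 - (1/2::real) ^ k"
  have q: "2 ^ (k + 1) * ?q = 2 ^ (k + 1) - 2"
    by (simp add: field_simps power_add)
  have "wt (kr_shape k (Suc r)) = (2 + (2 ^ (k + 1) - 2) * (1 - ?q ^ r)) * ?q"
    using kr_wt_step[OF Suc.prems, of r] Suc.IH[OF Suc.prems] by simp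
  also have "\<dots> = 2 ^ (k + 1) * ?q - (2 ^ (k + 1) - 2) * ?q ^ Suc r"
    by (simp add: algebra_simps)
  also have "\<dots> = (2 ^ (k + 1) - 2) * (1 - ?q ^ Suc r)" unfolding q by (simp add: algebra_simps)
  finally show ?case .
qed


lemma q_bound: "(1 - (1/2::real) ^ k) ^ (2 ^ k) \<le> 1/2"
proof -
  let ?h = "(1/2::real) ^ k"
  have h0: "0 \<le> 1 - ?h" by (simp add: power_le_one)
  have "1 - ?h \<le> exp (- ?h)" using exp_ge_add_one_self[of "- ?h"] by simp
  then have "(1 - ?h) ^ (2 ^ k) \<le> exp (- ?h) ^ (2 ^ k)" using h0 by (rule power_mono)
  also have "\<dots> = exp (real (2 ^ k) * (- ?h))" by (rule exp_of_nat_mult[symmetric])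
  also have "real (2 ^ k) * (- ?h) = -1" by (simp add: power_divide)
  also have "exp (-1::real) \<le> 1/2"
  proof -
    have "2 \<le> exp (1::real)" using exp_ge_add_one_self[of 1] by simp
    then show ?thesis by (simp add: exp_minus field_simps)
  qed
  finally show ?thesis .
qed

lemma wt_bounds:
  fixes W :: real
  assumes "W = (2 ^ (k + 1) - 2) * (1 - (1 - (1/2) ^ k) ^ (2 ^ k))" "k \<ge> 1"
  shows "2 ^ k - 1 \<le> W" "W \<le> 2 ^ (k + 1)"
proof -
  have q0: "0 \<le> (1 - (1/2::real) ^ k) ^ (2 ^ k)" by (simp add: power_le_one)
  have q1: "(1 - (1/2::real) ^ k) ^ (2 ^ k) \<le> 1/2" by (rule q_bound)
  have p: "(2::real) ^ (k + 1) - 2 \<ge> 0"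
  proof -
    have "(2::real) ^ 1 \<le> 2 ^ (k + 1)" by (rule power_increasing) auto
    then show ?thesis by simp
  qed
  have "(2 ^ (k + 1) - 2) * (1/2) \<le> W" unfolding assms(1) using q1 p by (intro mult_left_mono) auto
  then show "2 ^ k - 1 \<le> W" by simp
  have "W \<le> (2 ^ (k + 1) - 2) * 1" unfolding assms(1) using q0 p by (intro mult_left_mono) auto
  then show "W \<le> 2 ^ (k + 1)" by simp
qed

lemma log4: "log 2 (4::real) = 2"
proof -
  have "log 2 ((2::real) ^ 2) = 2" using log_pow_cancel[of "2::real" 2] by simp
  then show ?thesis by simp
qed

lemma log_bounds:
  fixes n :: real and k :: nat
  assumes k4: "k \<ge> 4" and lo: "real k ^ (2 ^ k) \<le> n" and hi: "n \<le> 2 * (real k + 1) ^ (2 ^ k)"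
  shows "2 ^ (k - 1) \<le> log 2 n / log 2 (log 2 (log 2 n))"
    "log 2 n / log 2 (log 2 (log 2 n)) \<le> 2 ^ (k + 1)"
proof -
  define r :: real where "r = 2 ^ k"
  have r1: "r \<ge> 1" unfolding r_def by simp
  define lk where "lk = log 2 (real k)"
  have kpos: "real k > 0" using k4 by simp
  have lk2: "lk \<ge> 2"
  proof -
    have "log 2 (4::real) \<le> log 2 (real k)" using k4 by (subst log_le_cancel_iff) auto
    moreover have "log 2 (4::real) = 2" using log4 .
    ultimately show ?thesis unfolding lk_def by simp
  qed
  have lkk: "lk \<le> real k"
  proof -
    have "real k \<le> 2 ^ k" using less_exp[of k] by (metis of_nat_le_iff less_imp_le of_nat_numeral of_nat_power)
    then have "log 2 (real k) \<le> log 2 (2 ^ k)" using kpos by (subst log_le_cancel_iff) auto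
    then show ?thesis unfolding lk_def by (simp add: log_pow_cancel)
  qed
  have npos: "n > 0" using lo kpos by (meson less_le_trans zero_less_power)
  define L where "L = log 2 n"
  have L1: "r * lk \<le> L"
  proof -
    have "log 2 (real k ^ (2 ^ k)) \<le> log 2 n" using lo kpos npos by (subst log_le_cancel_iff) auto
    moreover have "log 2 (real k ^ (2 ^ k)) = r * lk" unfolding r_def lk_def using kpos by (simp add: log_nat_power)
    ultimately show ?thesis unfolding L_def by simp
  qed
  have L2: "L \<le> 2 * r * lk"
  proof -
    have "log 2 n \<le> log 2 (2 * (real k + 1) ^ (2 ^ k))" using hi npos by (subst log_le_cancel_iff) auto
    also have "\<dots> = 1 + r * log 2 (real k + 1)" unfolding r_def by (simp add: log_mult log_nat_power)
    also have "log 2 (real k + 1) \<le> log 2 (2 * real k)" using kpos by (subst log_le_cancel_iff) auto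
    also have "log 2 (2 * real k) = 1 + lk" unfolding lk_def using kpos by (simp add: log_mult)
    finally have "log 2 n \<le> 1 + r * (1 + lk)" using r1 by (simp add: mult_left_mono)
    also have "\<dots> \<le> 2 * r * lk"
    proof -
      have "r * 1 \<le> r * (lk - 1)" using r1 lk2 by (intro mult_left_mono) auto
      then have a: "2 * r \<le> r * lk" by (simp add: algebra_simps)
      have b: "1 + r * (1 + lk) = 1 + r + r * lk" "2 * r * lk = r * lk + r * lk" by (simp_all add: algebra_simps)
      show ?thesis unfolding b using a r1 by linarith
    qed
    finally show ?thesis unfolding L_def .
  qed
  have "0 < r * lk" using r1 lk2 by simp
  then have Lpos: "L > 0" using L1 by linarith
  define LL where "LL = log 2 L"
  have LL1: "real k + 1 \<le> LL"
  proof -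
    have "log 2 (r * lk) \<le> log 2 L" using L1 r1 lk2 Lpos by (subst log_le_cancel_iff) auto
    moreover have "log 2 (r * lk) = real k + log 2 lk" unfolding r_def using lk2 by (simp add: log_mult)
    moreover have "1 \<le> log 2 lk" using lk2 by (subst le_log_iff) auto
    ultimately show ?thesis unfolding LL_def by linarith
  qed
  have LL2: "LL \<le> 3 * real k"
  proof -
    have "0 < 2 * r * lk" using \<open>0 < r * lk\<close> by (simp add: ac_simps)
    then have "log 2 L \<le> log 2 (2 * r * lk)" using L2 Lpos by (subst log_le_cancel_iff) auto
    moreover have "log 2 (2 * r * lk) = 1 + real k + log 2 lk" unfolding r_def using lk2 by (simp add: log_mult)
    moreover have "log 2 lk \<le> lk"
    proof -
      have "log 2 lk \<le> log 2 (real k)" using lkk lk2 kpos by (subst log_le_cancel_iff) auto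
      then show ?thesis unfolding lk_def .
    qed
    ultimately show ?thesis unfolding LL_def using lkk k4 by linarith
  qed
  define LLL where "LLL = log 2 LL"
  have LLL1: "lk \<le> LLL"
  proof -
    have "log 2 (real k) \<le> log 2 LL" using LL1 kpos by (subst log_le_cancel_iff) auto
    then show ?thesis unfolding lk_def LLL_def .
  qed
  have LLL2: "LLL \<le> 2 * lk"
  proof -
    have "log 2 LL \<le> log 2 (4 * real k)" using LL2 LL1 kpos by (subst log_le_cancel_iff) auto
    also have "log 2 (4 * real k) = 2 + lk" unfolding lk_def using kpos by (simp add: log_mult log4)
    finally show ?thesis unfolding LLL_def using lk2 by linarith
  qed
  have LLLpos: "LLL > 0" using LLL1 lk2 by linarith
  have "r * lk / (2 * lk) \<le> L / LLL"
    using L1 LLL2 LLLpos lk2 r1 Lpos by (intro frac_le) auto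
  moreover have "r * lk / (2 * lk) = 2 ^ (k - 1)" unfolding r_def using lk2 k4
    by (cases k) (auto simp: field_simps)
  ultimately show "2 ^ (k - 1) \<le> log 2 n / log 2 (log 2 (log 2 n))" unfolding L_def LL_def LLL_def by simp
  have "L / LLL \<le> 2 * r * lk / lk"
    using L2 LLL1 LLLpos lk2 r1 by (intro frac_le) auto
  moreover have "2 * r * lk / lk = 2 ^ (k + 1)" unfolding r_def using lk2 by simp
  ultimately show "log 2 n / log 2 (log 2 (log 2 n)) \<le> 2 ^ (k + 1)" unfolding L_def LL_def LLL_def by simp
qed


lemma main_bounds:
  assumes k: "k \<ge> 4" and r: "r = 2 ^ k" and at: "atomic_seq (kr_tree k r) X"
  shows "real (length X) * wt (kr_shape k r) / 2 \<le> real (opt_cost (kr_tree k r) X)"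
    "real (opt_cost (kr_tree k r) X) \<le> real (length X) * (wt (kr_shape k r) + 1)"
proof -
  define P where "P = kr_tree k r"
  have bP: "bst P" unfolding P_def kr_tree_def by (rule lab_bst)
  have fP: "full P" unfolding P_def kr_tree_def using kr_shape_full by simp
  have wP: "wt P = wt (kr_shape k r)" unfolding P_def kr_tree_def by simp
  have rs: "rep_stable P X" using at unfolding P_def atomic_seq_def by blast
  have ss: "strongly_stable P X" using rep_ss[OF rs] by blast
  have XP: "set X \<subseteq> set_tree P" using ss unfolding strongly_stable_def leaf_keys_def by blast
  have finP: "finite (set_tree P)" by simp
  have hal: "halving X P" unfolding halving_def
  proof
    fix v assume v: "v \<in> set_tree P"
    show "case subt P v of Leaf \<Rightarrow> True | Node l _ r \<Rightarrow>
      (l \<noteq> Leaf \<longrightarrow> 2 * cnt X (set_tree l) = cnt X (II P v) \<and>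
                      2 * cnt X (set_tree r) = cnt X (II P v))"
    proof (cases "v \<in> inner_keys P")
      case True then show ?thesis using stable_facts(4)[OF bP fP rs] by blast
    next
      case False
      then have "subt P v = Node Leaf v Leaf" using v unfolding inner_keys_def by blast
      then show ?thesis by simp
    qed
  qed
  have cr: "(\<Sum>v\<in>set_tree P. real (cnt X (II P v))) = real (cnt X (set_tree P)) * (wt P + 1)"
    "(\<Sum>v\<in>inner_keys P. real (cnt X (II P v))) = real (cnt X (set_tree P)) * wt P"
    using count_rec[OF bP fP hal] by auto
  have m: "cnt X (set_tree P) = length X" unfolding cnt_def using XP
    by (metis filter_True subsetD)
  have "opt_cost P X \<le> sum_list (map (\<lambda>x. card (path_nodes P x)) X)" by (rule opt_upper)
  also have "sum_list (map (\<lambda>x. card (path_nodes P x)) X) = (\<Sum>v\<in>set_tree P. cnt X (II P v))"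
    unfolding path_nodes_eq by (rule count_swap[OF finP])
  finally have "real (opt_cost P X) \<le> (\<Sum>v\<in>set_tree P. real (cnt X (II P v)))"
    by (simp flip: of_nat_sum)
  then show "real (opt_cost (kr_tree k r) X) \<le> real (length X) * (wt (kr_shape k r) + 1)"
    using cr m wP unfolding P_def by simp
  have finY: "finite (inner_keys P)" using finite_subset[of "inner_keys P" "set_tree P"] unfolding inner_keys_def by auto
  have YP: "inner_keys P \<subseteq> set_tree P" unfolding inner_keys_def by blast
  have "(\<Sum>y\<in>inner_keys P. Bf P P y X) \<le> opt_cost P X"
    using lower_exec[OF opt_exec bP refl bP YP finY] stable_facts(1,3)[OF bP fP rs] by blast
  moreover have "(\<Sum>y\<in>inner_keys P. real (cnt X (II P y)) / 2) \<le> (\<Sum>y\<in>inner_keys P. real (Bf P P y X))"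
  proof (rule sum_mono)
    fix y assume y: "y \<in> inner_keys P"
    have ev: "even (length (filter (\<lambda>x. x \<in> II P y) X))" using stable_facts(2)[OF bP fP rs y] .
    have "length (filter (\<lambda>x. x \<in> II P y) X) div 2 \<le> Bf P P y X" unfolding Bf_def by (rule Bv_ge)
    moreover have "real (length (filter (\<lambda>x. x \<in> II P y) X) div 2) = real (cnt X (II P y)) / 2"
      using ev unfolding cnt_def by (auto simp: real_of_nat_div)
    ultimately show "real (cnt X (II P y)) / 2 \<le> real (Bf P P y X)" by linarith
  qed
  moreover have "(\<Sum>y\<in>inner_keys P. real (Bf P P y X)) = real (\<Sum>y\<in>inner_keys P. Bf P P y X)"
    by simp
  moreover have "(\<Sum>y\<in>inner_keys P. real (cnt X (II P y)) / 2) = (\<Sum>y\<in>inner_keys P. real (cnt X (II P y))) / 2"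
    by (simp add: sum_divide_distrib)
  ultimately have "(\<Sum>y\<in>inner_keys P. real (cnt X (II P y))) / 2 \<le> real (opt_cost P X)"
    by (metis (no_types, lifting) of_nat_le_iff order_trans)
  then show "real (length X) * wt (kr_shape k r) / 2 \<le> real (opt_cost (kr_tree k r) X)"
    using cr m wP unfolding P_def by simp
qed

theorem lemma10:
  shows "\<exists>c1 c2 K. c1 > 0 \<and> c2 > 0 \<and>
    (\<forall>k r X. 2 \<le> k \<and> K \<le> k \<and> r = 2 ^ k \<and> atomic_seq (kr_tree k r) X \<longrightarrow>
       (let n = real (size (kr_tree k r));
            m = real (length X);
            g = m * log 2 n / log 2 (log 2 (log 2 n))
        in c1 * g \<le> real (opt_cost (kr_tree k r) X) \<and>
           real (opt_cost (kr_tree k r) X) \<le> c2 * g))"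
proof -
  have main: "let n = real (size (kr_tree k r)); m = real (length X);
            g = m * log 2 n / log 2 (log 2 (log 2 n))
        in 1/8 * g \<le> real (opt_cost (kr_tree k r) X) \<and>
           real (opt_cost (kr_tree k r) X) \<le> 8 * g"
    if h: "2 \<le> k \<and> 4 \<le> k \<and> r = 2 ^ k \<and> atomic_seq (kr_tree k r) X" for k r X
  proof -
  from h have k: "k \<ge> 4" and r: "r = 2 ^ k" and at: "atomic_seq (kr_tree k r) X" by auto
  define n where "n = real (size (kr_tree k r))"
  define m where "m = real (length X)"
  define A where "A = log 2 n / log 2 (log 2 (log 2 n))"
  define W where "W = wt (kr_shape k r)"
  define p :: real where "p = 2 ^ (k - 1)"
  have p1: "p \<ge> 1" unfolding p_def by simp
  have pk: "(2::real) ^ k = 2 * p" "(2::real) ^ (k + 1) = 4 * p" unfolding p_def using k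
    by (cases k; simp)+
  have m0: "m \<ge> 0" unfolding m_def by simp
  have ob: "m * W / 2 \<le> real (opt_cost (kr_tree k r) X)" "real (opt_cost (kr_tree k r) X) \<le> m * (W + 1)"
    using main_bounds[OF k r at] unfolding m_def W_def by auto
  have Wf: "W = (2 ^ (k + 1) - 2) * (1 - (1 - (1/2) ^ k) ^ (2 ^ k))"
    unfolding W_def r using kr_wt[of k "2 ^ k"] k by simp
  have Wb: "2 ^ k - 1 \<le> W" "W \<le> 2 ^ (k + 1)" using wt_bounds[OF Wf] k by auto
  have nsz: "size (kr_tree k r) = size (kr_shape k r)" unfolding kr_tree_def by simp
  have sb: "2 * k ^ r \<le> size (kr_shape k r) + 1" "size (kr_shape k r) + 1 \<le> 2 * (k + 1) ^ r"
    using kr_size_bounds[of k r] k by auto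
  have "1 \<le> k ^ r" using k by simp
  then have "k ^ r \<le> size (kr_shape k r)" using sb(1) by linarith
  then have "real (k ^ r) \<le> real (size (kr_shape k r))" by (simp only: of_nat_le_iff)
  then have nlo: "real k ^ (2 ^ k) \<le> n" unfolding n_def nsz using r by simp
  have "size (kr_shape k r) \<le> 2 * (k + 1) ^ r" using sb(2) by linarith
  then have "real (size (kr_shape k r)) \<le> real (2 * (k + 1) ^ r)" by (simp only: of_nat_le_iff)
  then have nhi: "n \<le> 2 * (real k + 1) ^ (2 ^ k)" unfolding n_def nsz using r by (simp add: add.commute)
  have Ab: "2 ^ (k - 1) \<le> A" "A \<le> 2 ^ (k + 1)" using log_bounds[OF k nlo nhi] unfolding A_def by auto
  have g: "m * log 2 n / log 2 (log 2 (log 2 n)) = m * A" unfolding A_def by simp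
  have lo: "1/8 * (m * A) \<le> real (opt_cost (kr_tree k r) X)"
  proof -
    have "1/8 * (m * A) \<le> 1/8 * (m * (4 * p))" using Ab(2) m0 pk by (intro mult_left_mono) auto
    also have "\<dots> \<le> m * W / 2"
    proof -
      have "p / 2 \<le> W / 2" using Wb(1) pk p1 by simp
      then have "m * (p / 2) \<le> m * (W / 2)" using m0 by (rule mult_left_mono)
      then show ?thesis by simp
    qed
    finally show ?thesis using ob(1) by linarith
  qed
  have hi: "real (opt_cost (kr_tree k r) X) \<le> 8 * (m * A)"
  proof -
    have "m * (W + 1) \<le> m * (8 * p)" using Wb(2) pk p1 m0 by (intro mult_left_mono) auto
    also have "\<dots> \<le> 8 * (m * A)" using mult_left_mono[OF Ab(1) m0] unfolding p_def by (simp add: mult.commute)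
    finally show ?thesis using ob(2) by linarith
  qed
  show "let n = real (size (kr_tree k r)); m = real (length X);
            g = m * log 2 n / log 2 (log 2 (log 2 n))
        in 1/8 * g \<le> real (opt_cost (kr_tree k r) X) \<and>
           real (opt_cost (kr_tree k r) X) \<le> 8 * g"
    unfolding Let_def n_def[symmetric] m_def[symmetric] g using lo hi by simp
  qed
  show ?thesis
    by (rule exI[of _ "1/8"], rule exI[of _ 8], rule exI[of _ 4], intro conjI allI impI)
       (simp, simp, rule main, assumption)
qed


end
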